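(* Let $D$ be a rad-colon coherent domain. If $\{P_\alpha\}_{\alpha\in A}$ is a chain of prime ideals of $D$ and $P:=\bigcup_\alpha P_\alpha$, then $\bigcap_\alpha D_{P_\alpha}=D_P$.
   Context: An integral domain $D$ with quotient field $K$ is called rad-colon coherent if, for every $x\in K$, the radical of the conductor $(D:_Dx)$ is the radical of a finitely generated ideal. *)

theory Defs
  imports Main
begin

text \<open>An integral domain D is represented as a subring of a field of type 'k
  whose quotient field is the whole type 'k (every element is a/b with a,b in D, b nonzero).\<close>

definition subring_of :: "'k::field set \<Rightarrow> bool" where
  "subring_of D \<longleftrightarrow> 0 \<in> D \<and> 1 \<in> D \<and>
     (\<forall>a\<in>D. \<forall>b\<in>D. a + b \<in> D \<and> a * b \<in> D) \<and> (\<forall>a\<in>D. - a \<in> D)"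

definition has_quotient_field_UNIV :: "'k::field set \<Rightarrow> bool" where
  "has_quotient_field_UNIV D \<longleftrightarrow> (\<forall>x. \<exists>a\<in>D. \<exists>b\<in>D. b \<noteq> 0 \<and> x = a / b)"

definition ideal_of :: "'k::field set \<Rightarrow> 'k set \<Rightarrow> bool" where
  "ideal_of D I \<longleftrightarrow> I \<subseteq> D \<and> 0 \<in> I \<and> (\<forall>a\<in>I. \<forall>b\<in>I. a + b \<in> I) \<and>
     (\<forall>r\<in>D. \<forall>a\<in>I. r * a \<in> I)"

definition prime_ideal_of :: "'k::field set \<Rightarrow> 'k set \<Rightarrow> bool" where
  "prime_ideal_of D P \<longleftrightarrow> ideal_of D P \<and> P \<noteq> D \<and>
     (\<forall>a\<in>D. \<forall>b\<in>D. a * b \<in> P \<longrightarrow> a \<in> P \<or> b \<in> P)"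

definition ideal_gen :: "'k::field set \<Rightarrow> 'k set \<Rightarrow> 'k set" where
  "ideal_gen D F = {\<Sum>f\<in>F. r f * f | r. \<forall>f\<in>F. r f \<in> D}"

definition radical_of :: "'k::field set \<Rightarrow> 'k set \<Rightarrow> 'k set" where
  "radical_of D I = {d \<in> D. \<exists>n::nat. d ^ n \<in> I}"

definition conductor :: "'k::field set \<Rightarrow> 'k \<Rightarrow> 'k set" where
  "conductor D x = {d \<in> D. d * x \<in> D}"

definition rad_colon_coherent :: "'k::field set \<Rightarrow> bool" where
  "rad_colon_coherent D \<longleftrightarrow> (\<forall>x::'k. \<exists>F. finite F \<and> F \<subseteq> D \<and>
     radical_of D (conductor D x) = radical_of D (ideal_gen D F))"

definition localization :: "'k::field set \<Rightarrow> 'k set \<Rightarrow> 'k set" where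
  "localization D P = {a / s | a s. a \<in> D \<and> s \<in> D \<and> s \<notin> P}"

end

theory Submission
  imports Defs
begin

lemma ideal_sum:
  assumes "ideal_of D I" "finite F" "\<forall>f\<in>F. g f \<in> I"
  shows "sum g F \<in> I"
  using assms(2,3)
proof (induction F rule: finite_induct)
  case empty then show ?case using assms(1) unfolding ideal_of_def by simp
next
  case (insert x F)
  then have "g x \<in> I" "sum g F \<in> I" by simp_all
  then have "g x + sum g F \<in> I" using assms(1) unfolding ideal_of_def by blast
  then show ?case using insert.hyps by simp
qed

lemma pow_in:
  assumes "subring_of D" "d \<in> D" shows "d ^ n \<in> D"
  using assms by (induction n) (auto simp: subring_of_def)

lemma prime_pow:
  assumes "subring_of D" "prime_ideal_of D Q" "d \<in> D" "d ^ n \<in> Q"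
  shows "d \<in> Q"
  using assms(4)
proof (induction n)
  case 0
  then have "1 \<in> Q" by simp
  have m: "\<forall>r\<in>D. \<forall>a\<in>Q. r * a \<in> Q" and s: "Q \<subseteq> D" and ne: "Q \<noteq> D"
    using assms(2) unfolding prime_ideal_of_def ideal_of_def by auto
  have "r \<in> Q" if "r \<in> D" for r
  proof -
    have "r * 1 \<in> Q" using m that \<open>1 \<in> Q\<close> by blast
    then show ?thesis by simp
  qed
  then have "D \<subseteq> Q" by blast
  then show ?case using s ne by blast
next
  case (Suc n)
  then have "d * d ^ n \<in> Q" by simp
  moreover have "d ^ n \<in> D" using pow_in assms(1,3) by blast
  ultimately show ?case using assms(2,3) Suc.IH unfolding prime_ideal_of_def by blast
qed

lemma chain_finite:
  assumes "finite F" "A \<noteq> {}" "\<forall>\<alpha>\<in>A. \<forall>\<beta>\<in>A. P \<alpha> \<subseteq> P \<beta> \<or> P \<beta> \<subseteq> P \<alpha>"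
    "F \<subseteq> (\<Union>\<alpha>\<in>A. P \<alpha>)"
  shows "\<exists>\<beta>\<in>A. F \<subseteq> P \<beta>"
  using assms(1,4)
proof (induction F rule: finite_induct)
  case empty then show ?case using assms(2) by blast
next
  case (insert x F)
  then obtain \<beta> where b: "\<beta> \<in> A" "F \<subseteq> P \<beta>" by blast
  obtain \<gamma> where g: "\<gamma> \<in> A" "x \<in> P \<gamma>" using insert.prems by blast
  have "P \<beta> \<subseteq> P \<gamma> \<or> P \<gamma> \<subseteq> P \<beta>" using assms(3) b(1) g(1) by blast
  then show ?case
  proof
    assume "P \<beta> \<subseteq> P \<gamma>" then show ?case using b g by blast
  next
    assume "P \<gamma> \<subseteq> P \<beta>" then show ?case using b g by blast
  qed
qed

lemma loc_iff:
  assumes "prime_ideal_of D Q"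
  shows "x \<in> localization D Q \<longleftrightarrow> (\<exists>d\<in>conductor D x. d \<notin> Q)"
proof
  have z: "0 \<in> Q" using assms unfolding prime_ideal_of_def ideal_of_def by blast
  {
    assume "x \<in> localization D Q"
    then obtain a s where "x = a / s" "a \<in> D" "s \<in> D" "s \<notin> Q"
      unfolding localization_def by blast
    moreover then have "s \<noteq> 0" using z by auto
    ultimately show "\<exists>d\<in>conductor D x. d \<notin> Q" unfolding conductor_def by auto
  }
  {
    assume "\<exists>d\<in>conductor D x. d \<notin> Q"
    then obtain d where "d \<in> D" "d * x \<in> D" "d \<notin> Q" unfolding conductor_def by blast
    moreover then have "d \<noteq> 0" using z by auto
    ultimately have "x = (d * x) / d" "d * x \<in> D" "d \<in> D" "d \<notin> Q" by simp_all
    then show "x \<in> localization D Q" unfolding localization_def by blast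
  }
qed

theorem proposition6p9:
  fixes D :: "'k::field set" and A :: "'i set" and P :: "'i \<Rightarrow> 'k set"
  assumes "subring_of D"
    and "has_quotient_field_UNIV D"
    and "rad_colon_coherent D"
    and "A \<noteq> {}"
    and "\<forall>\<alpha>\<in>A. prime_ideal_of D (P \<alpha>)"
    and "\<forall>\<alpha>\<in>A. \<forall>\<beta>\<in>A. P \<alpha> \<subseteq> P \<beta> \<or> P \<beta> \<subseteq> P \<alpha>"
  shows "(\<Inter>\<alpha>\<in>A. localization D (P \<alpha>)) = localization D (\<Union>\<alpha>\<in>A. P \<alpha>)"
proof
  show "localization D (\<Union>\<alpha>\<in>A. P \<alpha>) \<subseteq> (\<Inter>\<alpha>\<in>A. localization D (P \<alpha>))"
  proof
    fix y assume "y \<in> localization D (\<Union>\<alpha>\<in>A. P \<alpha>)"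
    then obtain a s where as: "y = a / s" "a \<in> D" "s \<in> D" "s \<notin> (\<Union>\<alpha>\<in>A. P \<alpha>)"
      unfolding localization_def by blast
    show "y \<in> (\<Inter>\<alpha>\<in>A. localization D (P \<alpha>))"
    proof
      fix \<alpha> assume "\<alpha> \<in> A"
      then have "s \<notin> P \<alpha>" using as(4) by blast
      then show "y \<in> localization D (P \<alpha>)" using as(1-3) unfolding localization_def by blast
    qed
  qed
next
  show "(\<Inter>\<alpha>\<in>A. localization D (P \<alpha>)) \<subseteq> localization D (\<Union>\<alpha>\<in>A. P \<alpha>)"
  proof
    fix x assume x: "x \<in> (\<Inter>\<alpha>\<in>A. localization D (P \<alpha>))"
    let ?I = "conductor D x"
    have nd: "\<forall>\<alpha>\<in>A. \<exists>d\<in>?I. d \<notin> P \<alpha>"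
    proof
      fix \<alpha> assume a: "\<alpha> \<in> A"
      then have "x \<in> localization D (P \<alpha>)" using x by blast
      moreover have "prime_ideal_of D (P \<alpha>)" using a assms(5) by blast
      ultimately show "\<exists>d\<in>?I. d \<notin> P \<alpha>" using loc_iff by blast
    qed
    have "\<exists>d\<in>?I. d \<notin> (\<Union>\<alpha>\<in>A. P \<alpha>)"
    proof (rule ccontr)
      assume "\<not> ?thesis"
      then have IP: "?I \<subseteq> (\<Union>\<alpha>\<in>A. P \<alpha>)" by blast
      obtain F where F: "finite F" "F \<subseteq> D"
        "radical_of D ?I = radical_of D (ideal_gen D F)"
        using assms(3) unfolding rad_colon_coherent_def by blast
      have "F \<subseteq> (\<Union>\<alpha>\<in>A. P \<alpha>)"
      proof
        fix f assume f: "f \<in> F"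
        have "(\<Sum>g\<in>F. (if g = f then 1 else 0) * g) = (\<Sum>g\<in>F. if g = f then g else 0)"
          by (rule sum.cong) auto
        also have "\<dots> = f" using F(1) f by simp
        finally have "f = (\<Sum>g\<in>F. (if g = f then 1 else 0) * g)" by (rule sym)
        moreover have "\<forall>g\<in>F. (if g = f then 1 else 0) \<in> D"
          using assms(1) unfolding subring_of_def by auto
        ultimately have "\<exists>r. f = (\<Sum>g\<in>F. r g * g) \<and> (\<forall>g\<in>F. r g \<in> D)"
          by (intro exI[of _ "\<lambda>g. if g = f then 1 else 0"] conjI) assumption+
        then have "f \<in> ideal_gen D F" unfolding ideal_gen_def by (rule CollectI)
        have fD: "f \<in> D" using F(2) f by blast
        have "f ^ 1 \<in> ideal_gen D F" using \<open>f \<in> ideal_gen D F\<close> by simp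
        then have "f \<in> radical_of D (ideal_gen D F)"
          unfolding radical_of_def using fD by blast
        then have "f \<in> radical_of D ?I" using F(3) by simp
        then obtain n where "f ^ n \<in> ?I" unfolding radical_of_def by blast
        then obtain \<gamma> where "\<gamma> \<in> A" "f ^ n \<in> P \<gamma>" using IP by blast
        moreover have "prime_ideal_of D (P \<gamma>)" using assms(5) \<open>\<gamma> \<in> A\<close> by blast
        ultimately have "f \<in> P \<gamma>" using prime_pow[OF assms(1) _ fD] by blast
        then show "f \<in> (\<Union>\<alpha>\<in>A. P \<alpha>)" using \<open>\<gamma> \<in> A\<close> by blast
      qed
      then obtain \<beta> where b: "\<beta> \<in> A" "F \<subseteq> P \<beta>"
        using chain_finite[OF F(1) assms(4) assms(6)] by blast
      have pb: "prime_ideal_of D (P \<beta>)" using assms(5) b by blast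
      have JP: "ideal_gen D F \<subseteq> P \<beta>"
      proof
        fix y assume "y \<in> ideal_gen D F"
        then obtain r where r: "y = (\<Sum>f\<in>F. r f * f)" "\<forall>f\<in>F. r f \<in> D"
          unfolding ideal_gen_def by blast
        have m: "\<forall>r\<in>D. \<forall>a\<in>P \<beta>. r * a \<in> P \<beta>" using pb
          unfolding prime_ideal_of_def ideal_of_def by blast
        have "\<forall>f\<in>F. r f * f \<in> P \<beta>" using r(2) b(2) m by blast
        moreover have idb: "ideal_of D (P \<beta>)" using pb unfolding prime_ideal_of_def by blast
        ultimately have "(\<Sum>f\<in>F. r f * f) \<in> P \<beta>"
          using ideal_sum[OF idb F(1), of "\<lambda>f. r f * f"] by blast
        then show "y \<in> P \<beta>" using r(1) by simp
      qed
      have "?I \<subseteq> P \<beta>"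
      proof
        fix d assume d: "d \<in> ?I"
        then have dD: "d \<in> D" unfolding conductor_def by blast
        have "d ^ 1 \<in> ?I" using d by simp
        then have "d \<in> radical_of D ?I" using dD unfolding radical_of_def by blast
        then have "d \<in> radical_of D (ideal_gen D F)" using F(3) by simp
        then obtain n where "d ^ n \<in> ideal_gen D F" unfolding radical_of_def by blast
        then show "d \<in> P \<beta>" using JP prime_pow[OF assms(1) pb dD] by blast
      qed
      then show False using nd b(1) by blast
    qed
    then obtain d where d: "d \<in> D" "d * x \<in> D" "d \<notin> (\<Union>\<alpha>\<in>A. P \<alpha>)"
      unfolding conductor_def by blast
    obtain \<alpha> where "\<alpha> \<in> A" using assms(4) by blast
    then have "0 \<in> P \<alpha>" using assms(5) unfolding prime_ideal_of_def ideal_of_def by blast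
    then have "d \<noteq> 0" using d(3) \<open>\<alpha> \<in> A\<close> by blast
    then have "x = (d * x) / d" by simp
    then show "x \<in> localization D (\<Union>\<alpha>\<in>A. P \<alpha>)" using d unfolding localization_def by blast
  qed
qed

end
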